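(* For every integer $\nu\ge0$, $$\operatorname{sech}^3(D/2)\,0^{[2\nu]}=2\tanh(D/2)\,0^{[2\nu+1]}=4\cosh(D/2)\,0^{[2\nu+2]},$$ and consequently $$4\sum_{k=1}^{\nu+1}2^{-2k}\,t(2\nu+2,2k)=\frac{(2\nu)!}{2^{2\nu}}\binom{-3/2}{\nu}.$$
   Context: Central factorials: $x^{[0]}=1$, $x^{[n]}=x\prod_{j=1}^{n-1}(x+\tfrac n2-j)$ for $n\ge1$; $t(n,k)$ is defined by $x^{[n]}=\sum_k t(n,k)x^k$. For a power series $h(D)=\sum_k h_kD^k$ (here the Taylor series at $0$ of the indicated functions of $D$), $h(D)\,0^{[n]}:=\sum_k h_k\,k!\,t(n,k)$. *)

theory Defs
  imports "HOL-Analysis.Analysis" "HOL-Computational_Algebra.Polynomial"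
begin

definition central_fact_poly :: "nat \<Rightarrow> real poly" where
  "central_fact_poly n =
     (if n = 0 then 1
      else [:0, 1:] * (\<Prod>j\<in>{1..n-1}. [: real n / 2 - real j, 1 :]))"

definition cf_t :: "nat \<Rightarrow> nat \<Rightarrow> real" where
  "cf_t n k = coeff (central_fact_poly n) k"

text \<open>h(D) 0^[n] = sum_k h_k k! t(n,k), where h_k k! is the k-th derivative at 0
  of the function h (Taylor coefficients at 0). Since t(n,k)=0 for k>n the sum is finite.\<close>
definition op_zero :: "(real \<Rightarrow> real) \<Rightarrow> nat \<Rightarrow> real" where
  "op_zero h n = (\<Sum>k\<le>n. (deriv ^^ k) h 0 * cf_t n k)"

end

theory Submission imports Defs begin

definition Ef :: "real \<Rightarrow> real \<Rightarrow> real" where "Ef b x = cosh (x/2) powr b"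
definition Of :: "real \<Rightarrow> real \<Rightarrow> real" where "Of b x = sinh (x/2) * cosh (x/2) powr b"

lemma cosh_half_pos: "cosh (x/2::real) > 0" by simp

lemma EE_deriv: "(Ef b has_real_derivative (b/2 * Of (b-1) x)) (at x)"
proof -
  have d: "((\<lambda>x. cosh (x/2)) has_real_derivative sinh(x/2) * (1/2)) (at x)"
    by (auto intro!: derivative_eq_intros)
  from DERIV_fun_powr[OF d cosh_half_pos, of b]
  show ?thesis unfolding Ef_def Of_def by (simp add: field_simps)
qed

lemma OO_deriv: "(Of b has_real_derivative ((b+1)/2 * Ef (b+1) x - b/2 * Ef (b-1) x)) (at x)"
proof -
  let ?C = "cosh (x/2)" and ?S = "sinh (x/2)"
  have d: "((\<lambda>x. cosh (x/2)) has_real_derivative ?S * (1/2)) (at x)"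
    by (auto intro!: derivative_eq_intros)
  have d2: "((\<lambda>x. sinh (x/2)) has_real_derivative ?C * (1/2)) (at x)"
    by (auto intro!: derivative_eq_intros)
  have "(Of b has_real_derivative (?C * (1/2) * ?C powr b + ?S * (b * ?C powr (b - of_nat 1) * (?S * (1/2))))) (at x)"
    using DERIV_mult[OF d2 DERIV_fun_powr[OF d cosh_half_pos, of b]] unfolding Of_def[abs_def] by (simp add: mult_ac)
  moreover have "?C * (1/2) * ?C powr b + ?S * (b * ?C powr (b - of_nat 1) * (?S * (1/2)))
     = (b+1)/2 * Ef (b+1) x - b/2 * Ef (b-1) x"
  proof -
    have p1: "?C * ?C powr b = ?C powr (b+1)" using cosh_half_pos[of x]
      by (simp add: powr_add)
    have p2: "?C^2 * ?C powr (b-1) = ?C powr (b+1)" using cosh_half_pos[of x]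
      by (simp add: powr_add[symmetric] add.commute flip: powr_numeral)
    have s: "?S^2 = ?C^2 - 1" by (simp add: cosh_square_eq)
    have "?S * (b * ?C powr (b - of_nat 1) * (?S * (1/2))) = b/2 * (?S^2 * ?C powr (b-1))"
      by (simp add: power2_eq_square)
    also have "\<dots> = b/2 * (?C powr (b+1) - ?C powr (b-1))"
      by (simp only: s left_diff_distrib p2 mult_1_left)
    finally show ?thesis using p1 unfolding Ef_def by (simp add: algebra_simps)
  qed
  ultimately show ?thesis by simp
qed

lemma Ef_d: "deriv (Ef b) = (\<lambda>x. b/2 * Of (b-1) x + 0 * Of (b-1) x)"
  using EE_deriv DERIV_imp_deriv by fastforce

lemma Of_d: "deriv (Of b) = (\<lambda>x. (b+1)/2 * Ef (b+1) x + (-b/2) * Ef (b-1) x)"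
  using OO_deriv DERIV_imp_deriv by fastforce

lemma Ef_diff: "Ef b differentiable (at x)"
  using EE_deriv real_differentiable_def by blast
lemma Of_diff: "Of b differentiable (at x)"
  using OO_deriv real_differentiable_def by blast

lemma lin_k:
  fixes f g :: "real \<Rightarrow> real"
  assumes "\<forall>j<k. \<forall>x. (deriv^^j) f differentiable (at x) \<and> (deriv^^j) g differentiable (at x)"
  shows "(deriv^^k) (\<lambda>x. a * f x + c * g x) = (\<lambda>x. a * (deriv^^k) f x + c * (deriv^^k) g x)"
  using assms
proof (induction k arbitrary: f g)
  case 0
  then show ?case by simp
next
  case (Suc k)
  have df: "\<And>x. f differentiable (at x)" "\<And>x. g differentiable (at x)"
    using Suc.prems by (metis funpow_0 zero_less_Suc)+
  have "deriv (\<lambda>x. a * f x + c * g x) = (\<lambda>x. a * deriv f x + c * deriv g x)"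
  proof
    fix x
    show "deriv (\<lambda>x. a * f x + c * g x) x = a * deriv f x + c * deriv g x"
    proof (rule DERIV_imp_deriv)
      have f': "(f has_real_derivative deriv f x) (at x)" and g': "(g has_real_derivative deriv g x) (at x)"
        using df DERIV_deriv_iff_real_differentiable by blast+
      show "((\<lambda>x. a * f x + c * g x) has_real_derivative a * deriv f x + c * deriv g x) (at x)"
        using DERIV_add[OF DERIV_cmult[OF f'] DERIV_cmult[OF g']] by simp
    qed
  qed
  moreover have "(deriv^^k) (\<lambda>x. a * deriv f x + c * deriv g x)
      = (\<lambda>x. a * (deriv^^k) (deriv f) x + c * (deriv^^k) (deriv g) x)"
  proof (rule Suc.IH, intro allI impI)
    fix j x assume "j < k"
    then have "Suc j < Suc k" by simp
    then show "(deriv ^^ j) (deriv f) differentiable at x \<and> (deriv ^^ j) (deriv g) differentiable at x"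
      using Suc.prems by (metis funpow_Suc_right comp_apply)
  qed
  ultimately show ?case by (simp add: funpow_Suc_right del: funpow.simps)
qed

lemma smooth_EO: "(deriv^^k) (Ef b) differentiable (at x) \<and> (deriv^^k) (Of b) differentiable (at x)"
proof (induction k arbitrary: b x rule: less_induct)
  case (less k)
  show ?case
  proof (cases k)
    case 0
    then show ?thesis by (simp add: Ef_diff Of_diff)
  next
    case (Suc m)
    have IH: "\<forall>j<m. \<forall>x. (deriv^^j) (Of (b-1)) differentiable (at x) \<and> (deriv^^j) (Of (b-1)) differentiable (at x)"
      "\<forall>j<m. \<forall>x. (deriv^^j) (Ef (b+1)) differentiable (at x) \<and> (deriv^^j) (Ef (b-1)) differentiable (at x)"
      using less Suc by auto
    have e: "(deriv^^k) (Ef b) = (\<lambda>x. b/2 * (deriv^^m) (Of (b-1)) x + 0 * (deriv^^m) (Of (b-1)) x)"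
    proof -
      have "(deriv^^k) (Ef b) = (deriv^^m) (deriv (Ef b))" by (simp add: Suc funpow_Suc_right del: funpow.simps)
      also have "\<dots> = (\<lambda>x. b/2 * (deriv^^m) (Of (b-1)) x + 0 * (deriv^^m) (Of (b-1)) x)"
        by (simp only: Ef_d lin_k[OF IH(1)])
      finally show ?thesis .
    qed
    have o: "(deriv^^k) (Of b) = (\<lambda>x. (b+1)/2 * (deriv^^m) (Ef (b+1)) x + (-b/2) * (deriv^^m) (Ef (b-1)) x)"
    proof -
      have "(deriv^^k) (Of b) = (deriv^^m) (deriv (Of b))" by (simp add: Suc funpow_Suc_right del: funpow.simps)
      also have "\<dots> = (\<lambda>x. (b+1)/2 * (deriv^^m) (Ef (b+1)) x + (-b/2) * (deriv^^m) (Ef (b-1)) x)"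
        by (simp only: Of_d lin_k[OF IH(2)])
      finally show ?thesis .
    qed
    have m: "m < k" using Suc by simp
    show ?thesis unfolding e o
      using less[OF m] by (auto intro!: derivative_intros)
  qed
qed

lemma lin_EO:
  assumes "f \<in> range Ef \<union> range Of" "g \<in> range Ef \<union> range Of"
  shows "(deriv^^k) (\<lambda>x. a * f x + c * g x) = (\<lambda>x. a * (deriv^^k) f x + c * (deriv^^k) g x)"
  by (rule lin_k) (use assms smooth_EO in auto)

lemma cfp_rec: "central_fact_poly (n+2) = [: (-(real n ^ 2)/4), 0, 1 :] * central_fact_poly n"
proof (cases "n = 0")
  case True
  then show ?thesis by (simp add: central_fact_poly_def)
next
  case False
  let ?f = "\<lambda>j::nat. [: real (n+2) / 2 - real j, 1 :]"
  have set: "{1..n+1} = insert 1 (insert (n+1) {1+1..(n-1)+1})" using False by auto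
  have "(\<Prod>j\<in>{1..n+1}. ?f j) = ?f 1 * (?f (n+1) * (\<Prod>j\<in>{1+1..(n-1)+1}. ?f j))"
    unfolding set using False by (subst prod.insert; auto)+
  also have "(\<Prod>j\<in>{1+1..(n-1)+1}. ?f j) = (\<Prod>j\<in>{1..n-1}. ?f (j+1))"
    by (rule prod.shift_bounds_cl_nat_ivl)
  also have "\<dots> = (\<Prod>j\<in>{1..n-1}. [: real n / 2 - real j, 1 :])"
    by (rule prod.cong) (auto simp: field_simps)
  finally have A: "(\<Prod>j\<in>{1..n+1}. ?f j) = ?f 1 * (?f (n+1) * (\<Prod>j\<in>{1..n-1}. [: real n / 2 - real j, 1 :]))" .
  have B: "?f 1 * ?f (n+1) = [: (-(real n ^ 2)/4), 0, 1 :]"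
    by (simp add: field_simps power2_eq_square)
  have "(\<Prod>j\<in>{1..n+1}. ?f j) = [: (-(real n ^ 2)/4), 0, 1 :] * (\<Prod>j\<in>{1..n-1}. [: real n / 2 - real j, 1 :])"
  proof -
    have "(\<Prod>j\<in>{1..n+1}. ?f j) = (?f 1 * ?f (n+1)) * (\<Prod>j\<in>{1..n-1}. [: real n / 2 - real j, 1 :])"
      unfolding A by (rule mult.assoc[symmetric])
    then show ?thesis unfolding B .
  qed
  then show ?thesis using False unfolding central_fact_poly_def by (simp add: mult_ac)
qed

lemma cft_rec: "cf_t (n+2) k = -(real n ^ 2)/4 * cf_t n k + (if 2 \<le> k then cf_t n (k-2) else 0)"
  unfolding cf_t_def cfp_rec by (cases k; cases "k - 1") (simp_all add: mult_pCons_left coeff_pCons)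

lemma cfp_degree: "degree (central_fact_poly n) \<le> n"
proof (induction n rule: less_induct)
  case (less n)
  show ?case
  proof (cases "n < 2")
    case True
    then have "n = 0 \<or> n = 1" by auto
    then show ?thesis by (auto simp: central_fact_poly_def)
  next
    case False
    then obtain m where m: "n = m + 2" by (metis add.commute le_add_diff_inverse not_less)
    have "degree (central_fact_poly n) \<le> degree [: (-(real m ^ 2)/4), 0, 1 :] + degree (central_fact_poly m)"
      unfolding m cfp_rec by (rule degree_mult_le)
    also have "\<dots> \<le> 2 + m" using less[of m] m by simp
    finally show ?thesis using m by simp
  qed
qed

lemma cft_zero: "k > n \<Longrightarrow> cf_t n k = 0"
  unfolding cf_t_def using cfp_degree[of n] by (simp add: coeff_eq_0)

lemma op_zero_ext: "op_zero h n = (\<Sum>k\<le>N. (deriv ^^ k) h 0 * cf_t n k)" if "n \<le> N"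
  unfolding op_zero_def using that
  by (intro sum.mono_neutral_left) (auto simp: cft_zero)

lemma op_zero_rec: "op_zero h (n+2) = op_zero (deriv (deriv h)) n - real n ^ 2/4 * op_zero h n"
proof -
  let ?d = "\<lambda>k. (deriv ^^ k) h 0"
  have "op_zero h (n+2) = (\<Sum>k\<le>n+2. ?d k * (-(real n ^ 2)/4 * cf_t n k))
      + (\<Sum>k\<le>n+2. ?d k * (if 2 \<le> k then cf_t n (k-2) else 0))"
    by (simp only: op_zero_def cft_rec distrib_left sum.distrib)
  also have "(\<Sum>k\<le>n+2. ?d k * (-(real n ^ 2)/4 * cf_t n k)) = -(real n ^ 2)/4 * op_zero h n"
  proof -
    have e: "op_zero h n = (\<Sum>k\<le>n+2. ?d k * cf_t n k)" by (rule op_zero_ext) simp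
    show ?thesis unfolding e sum_distrib_left by (rule sum.cong) (auto simp: mult_ac)
  qed
  also have "(\<Sum>k\<le>n+2. ?d k * (if 2 \<le> k then cf_t n (k-2) else 0))
      = (\<Sum>k\<le>n. ?d (Suc (Suc k)) * cf_t n k)"
    by (simp only: add_2_eq_Suc' sum.atMost_Suc_shift) simp
  also have "\<dots> = op_zero (deriv (deriv h)) n"
    unfolding op_zero_def by (simp add: funpow_Suc_right del: funpow.simps)
  finally show ?thesis by simp
qed

lemma op_zero_0: "op_zero h 0 = h 0"
  by (simp add: op_zero_def cf_t_def central_fact_poly_def)

lemma op_zero_1: "op_zero h 1 = deriv h 0"
  by (simp add: op_zero_def cf_t_def central_fact_poly_def)

lemma op_lin:
  assumes "f \<in> range Ef \<union> range Of" "g \<in> range Ef \<union> range Of"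
  shows "op_zero (\<lambda>x. a * f x + c * g x) n = a * op_zero f n + c * op_zero g n"
  unfolding op_zero_def lin_EO[OF assms] by (simp add: sum_distrib_left sum.distrib algebra_simps)

lemma Ef_dd: "deriv (deriv (Ef b)) = (\<lambda>x. b^2/4 * Ef b x + (-(b*(b-1)/4)) * Ef (b-2) x)"
proof -
  have "deriv (deriv (Ef b)) = (deriv^^1) (\<lambda>x. b/2 * Of (b-1) x + 0 * Of (b-1) x)"
    by (simp add: Ef_d del: mult_zero_left)
  also have "\<dots> = (\<lambda>x. b/2 * deriv (Of (b-1)) x + 0 * deriv (Of (b-1)) x)"
    by (subst lin_EO) auto
  also have "\<dots> = (\<lambda>x. b^2/4 * Ef b x + (-(b*(b-1)/4)) * Ef (b-2) x)"
    unfolding Of_d by (rule ext) (simp add: power2_eq_square field_simps)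
  finally show ?thesis .
qed

lemma Of_dd: "deriv (deriv (Of b)) = (\<lambda>x. (b+1)^2/4 * Of b x + (-(b*(b-1)/4)) * Of (b-2) x)"
proof -
  have "deriv (deriv (Of b)) = (deriv^^1) (\<lambda>x. (b+1)/2 * Ef (b+1) x + (-b/2) * Ef (b-1) x)"
    by (simp add: Of_d)
  also have "\<dots> = (\<lambda>x. (b+1)/2 * deriv (Ef (b+1)) x + (-b/2) * deriv (Ef (b-1)) x)"
    by (subst lin_EO) auto
  also have "\<dots> = (\<lambda>x. (b+1)^2/4 * Of b x + (-(b*(b-1)/4)) * Of (b-2) x)"
    unfolding Ef_d by (rule ext) (simp add: power2_eq_square field_simps)
  finally show ?thesis .
qed

lemma opE_rec: "op_zero (Ef b) (n+2) = (b^2 - real n^2)/4 * op_zero (Ef b) n - b*(b-1)/4 * op_zero (Ef (b-2)) n"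
  unfolding op_zero_rec Ef_dd by (subst op_lin) (auto simp: algebra_simps diff_divide_distrib)

lemma opO_rec: "op_zero (Of b) (n+2) = ((b+1)^2 - real n^2)/4 * op_zero (Of b) n - b*(b-1)/4 * op_zero (Of (b-2)) n"
  unfolding op_zero_rec Of_dd by (subst op_lin) (auto simp: algebra_simps diff_divide_distrib)

lemma Ef0: "Ef b 0 = 1" by (simp add: Ef_def)
lemma Of0: "Of b 0 = 0" by (simp add: Of_def)

lemma gstep: "of_nat (Suc m) * ((r::real) gchoose Suc m) = (r - of_nat m) * (r gchoose m)"
  using gbinomial_mult_1[of r m] by (simp add: algebra_simps)

lemma algA:
  fixes b u F P X :: real assumes "P \<noteq> 0" "u \<noteq> 0"
  shows "(b^2 - (2*(u-1))^2)/4 * (F/P*X) - (b-1)/4*(F/P)*(2*(b/2-(u-1))*X) = ((2*(u-1)+2)*(2*(u-1)+1)*F)/(4*P) * ((b/2-(u-1))*X/u)"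
  using assms by (simp add: field_simps power2_eq_square)

lemma algB:
  fixes b u F P X :: real assumes "P \<noteq> 0" "u \<noteq> 0"
  shows "((b+1)^2 - (2*(u-1)+1)^2)/4 * (F/(2*P)*X) - (b-1)/4*(F/(2*P))*(2*(b/2-(u-1))*X) = ((2*(u-1)+3)*(2*(u-1)+2)*F)/(2*(4*P)) * ((b/2-(u-1))*X/u)"
  using assms by (simp add: field_simps power2_eq_square)

lemma closed:
  "op_zero (Ef b) (2*m) = fact (2*m) / 4^m * ((b/2) gchoose m) \<and> op_zero (Ef b) (2*m+1) = 0
   \<and> op_zero (Of b) (2*m) = 0 \<and> op_zero (Of b) (2*m+1) = fact (2*m+1) / (2*4^m) * ((b/2) gchoose m)"
proof (induction m arbitrary: b)
  case 0
  show ?case by (simp add: op_zero_0 op_zero_1[unfolded One_nat_def] Ef0 Of0 Ef_d Of_d field_simps)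
next
  case (Suc m)
  let ?r = "b/2"
  let ?X = "?r gchoose m" and ?Y = "(?r - 1) gchoose m" and ?Z = "?r gchoose Suc m"
  have br: "(b-2)/2 = ?r - 1" by simp
  have Z: "?Z = (?r - m) * ?X / (m+1)" using gstep[of m ?r] by (simp add: field_simps)
  have Y: "b * ?Y = 2 * (?r - m) * ?X" using gbinomial_absorb_comp[of ?r m] by (simp add: algebra_simps)
  have e1: "2 * Suc m = 2*m + 2" "2 * Suc m + 1 = (2*m+1) + 2" by simp_all
  have f1: "fact (2*m+2) = (2*m+2)*(2*m+1)*(fact (2*m) :: real)"
    by (simp add: fact_Suc algebra_simps numeral_2_eq_2)
  have f2: "fact (2*m+3) = (2*m+3)*(2*m+2)*(fact (2*m+1) :: real)"
    by (simp add: fact_Suc algebra_simps numeral_3_eq_3 numeral_2_eq_2)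
  have IH: "op_zero (Ef b) (2*m) = fact (2*m) / 4^m * ?X" "op_zero (Ef b) (2*m+1) = 0"
     "op_zero (Of b) (2*m) = 0" "op_zero (Of b) (2*m+1) = fact (2*m+1) / (2*4^m) * ?X"
     "op_zero (Ef (b-2)) (2*m) = fact (2*m) / 4^m * ?Y" "op_zero (Ef (b-2)) (2*m+1) = 0"
     "op_zero (Of (b-2)) (2*m) = 0" "op_zero (Of (b-2)) (2*m+1) = fact (2*m+1) / (2*4^m) * ?Y"
    using Suc.IH[of b] Suc.IH[of "b-2"] br by auto
  have A: "op_zero (Ef b) (2 * Suc m) = fact (2 * Suc m) / 4 ^ Suc m * ?Z"
  proof -
    have "op_zero (Ef b) (2 * Suc m) = (b^2 - (2*m)^2)/4 * (fact (2*m) / 4^m * ?X) - (b-1)/4 * (fact (2*m) / 4^m) * (b * ?Y)"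
      unfolding e1 opE_rec IH by simp
    also have "\<dots> = ((2*m+2)*(2*m+1)*fact (2*m))/(4*4^m) * ((b/2-m)*?X/(m+1))"
      unfolding Y using algA[of "4^m" "real m + 1" b "fact (2*m)" ?X] by (simp add: algebra_simps)
    also have "\<dots> = fact (2 * Suc m) / 4 ^ Suc m * ?Z"
      unfolding Z e1 f1 by (simp add: algebra_simps)
    finally show ?thesis .
  qed
  have B: "op_zero (Of b) (2 * Suc m + 1) = fact (2 * Suc m + 1) / (2 * 4 ^ Suc m) * ?Z"
  proof -
    have "op_zero (Of b) (2 * Suc m + 1) = ((b+1)^2 - (2*m+1)^2)/4 * (fact (2*m+1) / (2*4^m) * ?X) - (b-1)/4 * (fact (2*m+1) / (2*4^m)) * (b * ?Y)"
      unfolding e1(2) opO_rec IH by simp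
    also have "\<dots> = ((2*m+3)*(2*m+2)*fact (2*m+1))/(2*(4*4^m)) * ((b/2-m)*?X/(m+1))"
      unfolding Y using algB[of "4^m" "real m + 1" b "fact (2*m+1)" ?X] by (simp add: algebra_simps)
    also have "\<dots> = fact (2 * Suc m + 1) / (2 * 4 ^ Suc m) * ?Z"
      unfolding Z f2[symmetric] by (simp add: eval_nat_numeral algebra_simps)
    finally show ?thesis .
  qed
  have C: "op_zero (Ef b) (2*Suc m+1) = 0" unfolding e1(2) opE_rec IH by simp
  have D: "op_zero (Of b) (2*Suc m) = 0" unfolding e1(1) opO_rec IH by simp
  show ?case using A B C D by blast
qed


lemma Ef1_even: "(deriv^^(2*j)) (Ef 1) = (\<lambda>x. (1/4)^j * Ef 1 x)"
proof (induction j)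
  case 0 then show ?case by simp
next
  case (Suc j)
  have dd: "deriv (deriv (Ef 1)) = (\<lambda>x. 1/4 * Ef 1 x + 0 * Ef (-1) x)"
    unfolding Ef_dd by (rule ext) simp
  have e: "2*Suc j = 2*j + 2" by simp
  have "(deriv^^(2*Suc j)) (Ef 1) = (deriv^^(2*j)) ((deriv^^2) (Ef 1))"
    unfolding e by (simp only: funpow_add comp_apply)
  also have "(deriv^^2) (Ef 1) = deriv (deriv (Ef 1))" by (simp add: numeral_2_eq_2)
  also have "(deriv^^(2*j)) (deriv (deriv (Ef 1))) = (\<lambda>x. 1/4 * (deriv^^(2*j)) (Ef 1) x + 0 * (deriv^^(2*j)) (Ef (-1)) x)"
    unfolding dd by (rule lin_EO) auto
  finally show ?case unfolding Suc.IH by simp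
qed

lemma Ef1_odd: "(deriv^^(2*j+1)) (Ef 1) 0 = 0"
proof -
  have "(deriv^^(2*j+1)) (Ef 1) = deriv (\<lambda>x. (1/4)^j * Ef 1 x)"
    using Ef1_even by simp
  moreover have "deriv (\<lambda>x. (1/4)^j * Ef 1 x) 0 = (1/4)^j * (1/2 * Of 0 0)"
    by (rule DERIV_imp_deriv) (use DERIV_cmult[OF EE_deriv[of 1 0], of "(1/4)^j"] in simp)
  ultimately show ?thesis by (simp add: Of0)
qed

lemma sum_even_odd: "(\<Sum>k\<le>2*N. f k) = (\<Sum>j\<le>N. f (2*j)) + (\<Sum>j<N. f (2*j+1 :: nat)) " for f :: "nat \<Rightarrow> real"
proof (induction N)
  case 0 then show ?case by simp
next
  case (Suc N)
  have "2 * Suc N = Suc (Suc (2*N))" by simp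
  then show ?case using Suc by (simp add: algebra_simps)
qed

lemma cft_0: "n \<ge> 1 \<Longrightarrow> cf_t n 0 = 0"
  by (simp add: cf_t_def central_fact_poly_def)

lemma Ef1_sum: "op_zero (Ef 1) (2*N+2) = (\<Sum>k=1..N+1. cf_t (2*N+2) (2*k) / 2^(2*k))"
proof -
  have "op_zero (Ef 1) (2*(N+1)) = (\<Sum>j\<le>N+1. (1/4)^j * cf_t (2*N+2) (2*j))
      + (\<Sum>j<N+1. (deriv^^(2*j+1)) (Ef 1) 0 * cf_t (2*N+2) (2*j+1))"
    unfolding op_zero_def sum_even_odd Ef1_even by (simp add: Ef_def)
  also have "(\<Sum>j<N+1. (deriv^^(2*j+1)) (Ef 1) 0 * cf_t (2*N+2) (2*j+1)) = 0"
    by (intro sum.neutral ballI) (simp only: Ef1_odd mult_zero_left)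
  also have "{..N+1} = insert 0 {1..N+1}" by auto
  also have "(\<Sum>j\<in>insert 0 {1..N+1}. (1/4)^j * cf_t (2*N+2) (2*j)) = (\<Sum>k=1..N+1. cf_t (2*N+2) (2*k) / 2^(2*k))"
    by (subst sum.insert) (auto simp: cft_0 power_mult power_one_over intro!: sum.cong)
  finally show ?thesis by simp
qed

lemma fun1: "(\<lambda>x. 1 / (cosh (x / 2)) ^ 3) = Ef (-3)"
proof
  fix x :: real
  have "cosh (x/2) powr (-3) = inverse (cosh (x/2) powr 3)" by (rule powr_minus)
  also have "cosh (x/2) powr 3 = cosh (x/2) ^ 3"
    using cosh_half_pos[of x] by (intro powr_numeral) (rule less_imp_le)
  finally have "Ef (-3) x = inverse (cosh (x/2) ^ 3)" unfolding Ef_def by (simp only:)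
  then show "1 / (cosh (x / 2)) ^ 3 = Ef (-3) x" by (simp only: divide_inverse mult_1_left)
qed

lemma fun2: "(\<lambda>x. tanh (x / 2)) = Of (-1)"
proof
  fix x :: real
  have "cosh (x/2) powr (-1) = inverse (cosh (x/2) powr 1)" by (rule powr_minus)
  also have "cosh (x/2) powr 1 = cosh (x/2)" using cosh_half_pos[of x] by (simp only: powr_one_gt_zero_iff less_imp_le)
  finally have "Of (-1) x = sinh (x/2) * inverse (cosh (x/2))" unfolding Of_def by (simp only:)
  then show "tanh (x / 2) = Of (-1) x" by (simp only: tanh_def divide_inverse)
qed

lemma fun3: "(\<lambda>x. cosh (x / 2)) = Ef 1"
  by (rule ext) (simp add: Ef_def)

lemma alg3:
  fixes F P A u :: real assumes "P \<noteq> 0" "u \<noteq> 0"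
  shows "2*((2*(u-1)+1)*F/(2*P)*A) = 4*((2*(u-1)+2)*(2*(u-1)+1)*F/(4*P)*(A/(2*u)))"
  using assms by (simp add: field_simps)

theorem mainTheorem7:
  fixes \<nu> :: nat
  shows "op_zero (\<lambda>x. 1 / (cosh (x / 2)) ^ 3) (2 * \<nu>)
           = 2 * op_zero (\<lambda>x. tanh (x / 2)) (2 * \<nu> + 1)
       \<and> 2 * op_zero (\<lambda>x. tanh (x / 2)) (2 * \<nu> + 1)
           = 4 * op_zero (\<lambda>x. cosh (x / 2)) (2 * \<nu> + 2)
       \<and> 4 * (\<Sum>k=1..\<nu>+1. cf_t (2 * \<nu> + 2) (2 * k) / 2 ^ (2 * k))
           = fact (2 * \<nu>) / 2 ^ (2 * \<nu>) * ((-3/2 :: real) gchoose \<nu>)"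
proof -
  let ?A = "(-1/2::real) gchoose \<nu>"
  have v1: "op_zero (\<lambda>x. 1 / (cosh (x / 2)) ^ 3) (2 * \<nu>) = fact (2*\<nu>) / 4^\<nu> * ((-3/2) gchoose \<nu>)"
    unfolding fun1 using closed[of "-3" \<nu>] by simp
  have v2: "op_zero (\<lambda>x. tanh (x / 2)) (2 * \<nu> + 1) = fact (2*\<nu>+1) / (2*4^\<nu>) * ?A"
    unfolding fun2 using closed[of "-1" \<nu>] by simp
  have v3: "op_zero (\<lambda>x. cosh (x / 2)) (2 * \<nu> + 2) = fact (2*\<nu>+2) / 4^(\<nu>+1) * ((1/2) gchoose Suc \<nu>)"
    unfolding fun3 using closed[of "1" "Suc \<nu>"] by (simp add: eval_nat_numeral)
  have g1: "((-3/2::real) gchoose \<nu>) = (2*\<nu>+1) * ?A"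
    using gbinomial_absorb_comp[of "-1/2::real" \<nu>] by (simp add: field_simps)
  have g2: "((1/2::real) gchoose Suc \<nu>) = ?A / (2*(\<nu>+1))"
  proof -
    have a: "(real \<nu> + 1) * ((1/2::real) gchoose Suc \<nu>) = (1/2 - real \<nu>) * ((1/2::real) gchoose \<nu>)"
      using gstep[of \<nu> "1/2"] by (simp add: add.commute)
    have b: "(1/2 - real \<nu>) * ((1/2::real) gchoose \<nu>) = 1/2 * ?A"
      using gbinomial_absorb_comp[of "1/2::real" \<nu>] by simp
    have c: "real \<nu> + 1 \<noteq> 0" by simp
    have "((1/2::real) gchoose Suc \<nu>) = ((real \<nu> + 1) * ((1/2::real) gchoose Suc \<nu>)) / (real \<nu> + 1)"
      using c by simp
    also have "\<dots> = (1/2 * ?A) / (real \<nu> + 1)" unfolding a b ..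
    finally show ?thesis by simp
  qed
  have f1: "fact (2*\<nu>+1) = (2*\<nu>+1) * (fact (2*\<nu>) :: real)" by (simp add: fact_Suc)
  have f2: "fact (2*\<nu>+2) = (2*\<nu>+2) * (2*\<nu>+1) * (fact (2*\<nu>) :: real)"
    by (simp add: fact_Suc eval_nat_numeral algebra_simps)
  have e1: "op_zero (\<lambda>x. 1 / (cosh (x / 2)) ^ 3) (2 * \<nu>) = 2 * op_zero (\<lambda>x. tanh (x / 2)) (2 * \<nu> + 1)"
    unfolding v1 v2 g1 f1 by (simp add: field_simps)
  have e2: "2 * op_zero (\<lambda>x. tanh (x / 2)) (2 * \<nu> + 1) = 4 * op_zero (\<lambda>x. cosh (x / 2)) (2 * \<nu> + 2)"
    unfolding v2 v3 g2 f1 f2 using alg3[of "4^\<nu>" "real \<nu> + 1" "fact (2*\<nu>)" ?A] by (simp add: algebra_simps)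
  have e3: "4 * (\<Sum>k=1..\<nu>+1. cf_t (2 * \<nu> + 2) (2 * k) / 2 ^ (2 * k)) = 4 * op_zero (\<lambda>x. cosh (x / 2)) (2 * \<nu> + 2)"
    unfolding fun3 Ef1_sum ..
  have e4: "fact (2 * \<nu>) / 2 ^ (2 * \<nu>) * ((-3/2 :: real) gchoose \<nu>) = op_zero (\<lambda>x. 1 / (cosh (x / 2)) ^ 3) (2 * \<nu>)"
    unfolding v1 by (simp add: power_mult)
  show ?thesis using e1 e2 e3 e4 by simp
qed


end
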